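(* Let $b,c_1,c_2$ be positive integers, let $\alpha/\beta$ be the right lobster $\mathcal{L}^{c_1,c_2}_b$, and let $T$ be a minimal element of $\mathrm{SET}(\alpha/\beta)$. Then for every column of $\alpha/\beta$, the set of entries of $T$ in the cells of that column is an interval of consecutive integers.
   Context: Rows are numbered from the bottom. The right lobster $\mathcal{L}^{c_1,c_2}_b$ is the skew diagram $\alpha/\beta$ with $\alpha=(b+1+c_2,b+1,b+1+c_1)$, $\beta=(b+1,1,b+1)$: a bottom row of $c_2$ cells in columns $b+2,\ldots,b+1+c_2$, a middle row of $b$ cells in columns $2,\ldots,b+1$, and a top row of $c_1$ cells in columns $b+2,\ldots,b+1+c_1$. $\mathrm{SET}(\alpha/\beta)$ is the set of bijective fillings with $1,\ldots,N$ ($N=b+c_1+c_2$) whose rows increase left to right and columns increase bottom to top. For $1\le i\le N-1$, $\pi_i(T)=T$ if $i+1$ is in a strictly higher row than $i$, $\pi_i(T)=s_i(T)$ (swap $i$ and $i+1$) if $i+1$ is in a strictly lower row than $i$, and $\pi_i(T)=0$ otherwise; the poset order is $T\le T'$ iff $T'$ is obtained from $T$ by a sequence of operators $\pi_i$ (all intermediate results nonzero); minimal elements are those with no strictly smaller element. *)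

theory Defs
  imports Main
begin

text \<open>Cells are pairs (row, column); rows are numbered from the bottom (row 1 = bottom).\<close>
type_synonym cell = "nat \<times> nat"
type_synonym filling = "cell \<Rightarrow> nat"

definition lobster_cells :: "nat \<Rightarrow> nat \<Rightarrow> nat \<Rightarrow> cell set" where
  "lobster_cells b c1 c2 =
     {(1, j) | j. b + 2 \<le> j \<and> j \<le> b + 1 + c2} \<union>
     {(2, j) | j. 2 \<le> j \<and> j \<le> b + 1} \<union>
     {(3, j) | j. b + 2 \<le> j \<and> j \<le> b + 1 + c1}"

text \<open>Values outside D are fixed to 0
  so that a filling is determined by its values on D.\<close>
definition SET :: "cell set \<Rightarrow> filling set" where
  "SET D = {T. bij_betw T D {1..card D} \<and> (\<forall>c. c \<notin> D \<longrightarrow> T c = 0) \<and>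
     (\<forall>r j j'. (r, j) \<in> D \<longrightarrow> (r, j') \<in> D \<longrightarrow> j < j' \<longrightarrow> T (r, j) < T (r, j')) \<and>
     (\<forall>r r' j. (r, j) \<in> D \<longrightarrow> (r', j) \<in> D \<longrightarrow> r < r' \<longrightarrow> T (r, j) < T (r', j))}"

definition row_of :: "cell set \<Rightarrow> filling \<Rightarrow> nat \<Rightarrow> nat" where
  "row_of D T k = fst (THE c. c \<in> D \<and> T c = k)"

definition swap_entries :: "nat \<Rightarrow> filling \<Rightarrow> filling" where
  "swap_entries i T = (\<lambda>c. if T c = i then i + 1 else if T c = i + 1 then i else T c)"

text \<open>The operator pi_i; None stands for the result 0.\<close>
definition pi_op :: "cell set \<Rightarrow> nat \<Rightarrow> filling \<Rightarrow> filling option" where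
  "pi_op D i T =
     (if row_of D T i < row_of D T (i + 1) then Some T
      else if row_of D T (i + 1) < row_of D T i then Some (swap_entries i T)
      else None)"

definition pi_step :: "cell set \<Rightarrow> filling \<Rightarrow> filling \<Rightarrow> bool" where
  "pi_step D T T' \<longleftrightarrow> (\<exists>i. 1 \<le> i \<and> i + 1 \<le> card D \<and> pi_op D i T = Some T')"

definition pi_le :: "cell set \<Rightarrow> filling \<Rightarrow> filling \<Rightarrow> bool" where
  "pi_le D T T' \<longleftrightarrow> (pi_step D)\<^sup>*\<^sup>* T T'"

definition minimal_SET :: "cell set \<Rightarrow> filling \<Rightarrow> bool" where
  "minimal_SET D T \<longleftrightarrow> T \<in> SET D \<and>
     \<not> (\<exists>T' \<in> SET D. pi_le D T' T \<and> T' \<noteq> T)"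

end

theory Submission
  imports Defs
begin

definition sig :: "nat \<Rightarrow> nat \<Rightarrow> nat" where
  "sig i v = (if v = i then i + 1 else if v = i + 1 then i else v)"

lemma sig_mono:
  assumes "u < v" "\<not> (u = i \<and> v = i + 1)"
  shows "sig i u < sig i v"
  using assms unfolding sig_def by auto

lemma sig_sig: "sig i (sig i v) = v" unfolding sig_def by auto

lemma swap_eq: "swap_entries i T = sig i \<circ> T"
  unfolding swap_entries_def sig_def by (rule ext) simp

lemma SET_D:
  assumes "T \<in> SET D"
  shows "bij_betw T D {1..card D}" "\<forall>c. c \<notin> D \<longrightarrow> T c = 0"
    "\<forall>r j j'. (r, j) \<in> D \<longrightarrow> (r, j') \<in> D \<longrightarrow> j < j' \<longrightarrow> T (r, j) < T (r, j')"
    "\<forall>r r' j. (r, j) \<in> D \<longrightarrow> (r', j) \<in> D \<longrightarrow> r < r' \<longrightarrow> T (r, j) < T (r', j)"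
  using assms unfolding SET_def by blast+

lemma row_of_cell:
  assumes "T \<in> SET D" "c \<in> D"
  shows "row_of D T (T c) = fst c"
proof -
  have inj: "inj_on T D" using SET_D(1)[OF assms(1)] bij_betw_imp_inj_on by blast
  have "(THE c'. c' \<in> D \<and> T c' = T c) = c"
    by (rule the_equality) (use assms(2) inj in \<open>auto simp: inj_on_def\<close>)
  then show ?thesis unfolding row_of_def by simp
qed

lemma swap_SET:
  assumes T: "T \<in> SET D" and x: "x \<in> D" and y: "y \<in> D"
    and Tx: "T x = i" and Ty: "T y = i + 1"
    and r: "fst x \<noteq> fst y" and cl: "snd x \<noteq> snd y"
  shows "swap_entries i T \<in> SET D"
proof -
  note bij = SET_D(1)[OF T] and out = SET_D(2)[OF T]
    and rows = SET_D(3)[OF T] and cols = SET_D(4)[OF T]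
  have inj: "inj_on T D" using bij bij_betw_imp_inj_on by blast
  have TD: "T ` D = {1..card D}" using bij bij_betw_imp_surj_on by blast
  have i1: "1 \<le> i" using TD x Tx by (metis atLeastAtMost_iff imageI)
  have i2: "i + 1 \<le> card D" using TD y Ty by (metis atLeastAtMost_iff imageI)
  have bs: "bij_betw (sig i) {1..card D} {1..card D}"
  proof (rule bij_betw_imageI)
    show "inj_on (sig i) {1..card D}" unfolding inj_on_def by (metis sig_sig)
    have sub: "sig i v \<in> {1..card D}" if "v \<in> {1..card D}" for v
      using that i1 i2 unfolding sig_def by auto
    show "sig i ` {1..card D} = {1..card D}"
    proof
      show "sig i ` {1..card D} \<subseteq> {1..card D}" using sub by blast
      show "{1..card D} \<subseteq> sig i ` {1..card D}"
        using sub sig_sig by (metis image_eqI subsetI)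
    qed
  qed
  have key: "\<not> (T p = i \<and> T q = i + 1)" if "p \<in> D" "q \<in> D" "fst p = fst q \<or> snd p = snd q" for p q
  proof
    assume "T p = i \<and> T q = i + 1"
    then have "p = x" "q = y" using inj_onD[OF inj, of p x] inj_onD[OF inj, of q y] that(1,2) x y Tx Ty by auto
    then show False using that r cl by blast
  qed
  show ?thesis unfolding SET_def swap_eq
  proof (intro CollectI conjI allI impI)
    show "bij_betw (sig i \<circ> T) D {1..card D}"
      using bij_betw_trans[OF bij bs] .
    fix c assume "c \<notin> D" then have "T c = 0" using out by blast
    then show "(sig i \<circ> T) c = 0" using i1 unfolding sig_def by simp
  next
    fix r j j' assume a: "(r, j) \<in> D" "(r, j') \<in> D" "j < j'"
    then have "T (r, j) < T (r, j')" using rows by blast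
    moreover have "\<not> (T (r, j) = i \<and> T (r, j') = i + 1)" using key[OF a(1,2)] by simp
    ultimately show "(sig i \<circ> T) (r, j) < (sig i \<circ> T) (r, j')"
      unfolding o_def by (rule sig_mono)
  next
    fix r r' j assume a: "(r, j) \<in> D" "(r', j) \<in> D" "r < r'"
    then have "T (r, j) < T (r', j)" using cols by blast
    moreover have "\<not> (T (r, j) = i \<and> T (r', j) = i + 1)" using key[OF a(1,2)] by simp
    ultimately show "(sig i \<circ> T) (r, j) < (sig i \<circ> T) (r', j)"
      unfolding o_def by (rule sig_mono)
  qed
qed


lemma swap_swap: "swap_entries i (swap_entries i T) = T"
  unfolding swap_eq by (rule ext) (simp add: sig_sig)

lemma not_minimal:
  assumes T: "T \<in> SET D" and x: "x \<in> D" and y: "y \<in> D"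
    and Tx: "T x = i" and Ty: "T y = i + 1"
    and r: "fst x < fst y" and cl: "snd x \<noteq> snd y"
  shows "\<not> minimal_SET D T"
proof -
  let ?S = "swap_entries i T"
  have S: "?S \<in> SET D" using swap_SET[OF T x y Tx Ty _ cl] r by simp
  have TD: "T ` D = {1..card D}" using SET_D(1)[OF T] bij_betw_imp_surj_on by blast
  have i1: "1 \<le> i" using TD x Tx by (metis atLeastAtMost_iff imageI)
  have i2: "i + 1 \<le> card D" using TD y Ty by (metis atLeastAtMost_iff imageI)
  have Sx: "?S x = i + 1" and Sy: "?S y = i" using Tx Ty unfolding swap_entries_def by auto
  have "row_of D ?S i = fst y" using row_of_cell[OF S y] Sy by simp
  moreover have "row_of D ?S (i + 1) = fst x" using row_of_cell[OF S x] Sx by simp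
  ultimately have "pi_op D i ?S = Some T" using r unfolding pi_op_def by (simp add: swap_swap)
  then have "pi_step D ?S T" unfolding pi_step_def using i1 i2 by blast
  then have "pi_le D ?S T" unfolding pi_le_def by blast
  moreover have "?S \<noteq> T" using Sx Tx by (metis n_not_Suc_n Suc_eq_plus1)
  ultimately show ?thesis using S unfolding minimal_SET_def by blast
qed

lemma ascent:
  fixes f :: "nat \<Rightarrow> nat"
  assumes "a \<le> c" "f a < f c"
  shows "\<exists>i. a \<le> i \<and> i < c \<and> f i < f (i + 1)"
proof (rule ccontr)
  assume n: "\<not> ?thesis"
  have "a + k \<le> c \<longrightarrow> f (a + k) \<le> f a" for k
  proof (induction k)
    case 0 then show ?case by simp
  next
    case (Suc k)
    show ?case
    proof
      assume h: "a + Suc k \<le> c"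
      then have "f (a + k + 1) \<le> f (a + k)" using n by (metis le_add1 not_less Suc_le_eq add_Suc_right)
      then show "f (a + Suc k) \<le> f a" using Suc h by simp
    qed
  qed
  then have "f c \<le> f a" using assms(1) by (metis le_add_diff_inverse order_refl)
  then show False using assms(2) by simp
qed

theorem lemma5p5:
  fixes b c1 c2 :: nat and T :: filling
  assumes "0 < b" and "0 < c1" and "0 < c2"
    and "minimal_SET (lobster_cells b c1 c2) T"
  shows "\<forall>j \<in> snd ` lobster_cells b c1 c2.
           \<exists>m n. T ` {c \<in> lobster_cells b c1 c2. snd c = j} = {m..n}"
proof
  define D where "D = lobster_cells b c1 c2"
  have T: "T \<in> SET D" using assms(4) unfolding minimal_SET_def D_def by blast
  note rows = SET_D(3)[OF T] and cols = SET_D(4)[OF T]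
  have TD: "T ` D = {1..card D}" using SET_D(1)[OF T] bij_betw_imp_surj_on by blast
  have twocol: "fst x = 1 \<and> fst y = 3" if "x \<in> D" "y \<in> D" "fst x < fst y" "snd x = snd y" for x y
    using that unfolding D_def lobster_cells_def by auto
  fix j assume "j \<in> snd ` lobster_cells b c1 c2"
  then have jD: "j \<in> snd ` D" using D_def by simp
  show "\<exists>m n. T ` {c \<in> lobster_cells b c1 c2. snd c = j} = {m..n}"
  proof (cases "(1, j) \<in> D \<and> (3, j) \<in> D")
    case False
    have "\<exists>c. {c \<in> D. snd c = j} = {c}"
    proof (cases "(2, j) \<in> D")
      case True
      then have "{c \<in> D. snd c = j} = {(2, j)}" unfolding D_def lobster_cells_def by auto
      then show ?thesis by blast
    next
      case n2: False
      show ?thesis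
      proof (cases "(1, j) \<in> D")
        case True
        then have "{c \<in> D. snd c = j} = {(1, j)}" using False unfolding D_def lobster_cells_def by auto
        then show ?thesis by blast
      next
        case n1: False
        have "(3, j) \<in> D" using jD n1 n2 unfolding D_def lobster_cells_def by auto
        then have "{c \<in> D. snd c = j} = {(3, j)}" using n1 n2 unfolding D_def lobster_cells_def by auto
        then show ?thesis by blast
      qed
    qed
    then obtain c where "{c \<in> D. snd c = j} = {c}" by blast
    then have "T ` {c \<in> lobster_cells b c1 c2. snd c = j} = {T c..T c}" unfolding D_def[symmetric] by simp
    then show ?thesis by blast
  next
    case True
    then have col: "{c \<in> D. snd c = j} = {(1, j), (3, j)}"
      unfolding D_def lobster_cells_def by auto
    define a where "a = T (1, j)"
    define c where "c = T (3, j)"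
    have ac: "a < c" using cols True unfolding a_def c_def by auto
    have "c = a + 1"
    proof (rule ccontr)
      assume ne: "c \<noteq> a + 1"
      let ?f = "row_of D T"
      have fa: "?f a = 1" using row_of_cell[OF T] True unfolding a_def by force
      have fc: "?f c = 3" using row_of_cell[OF T] True unfolding c_def by force
      obtain i where i: "a \<le> i" "i < c" "?f i < ?f (i + 1)"
        using ascent[of a c ?f] ac fa fc by auto
      have a1: "a \<ge> 1" using TD True unfolding a_def by (metis atLeastAtMost_iff imageI)
      have c2: "c \<le> card D" using TD True unfolding c_def by (metis atLeastAtMost_iff imageI)
      have "i \<in> T ` D" "i + 1 \<in> T ` D" using TD i a1 c2 by auto
      then obtain x y where x: "x \<in> D" "T x = i" and y: "y \<in> D" "T y = i + 1" by force
      have rxy: "fst x < fst y"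
        using i(3) row_of_cell[OF T x(1)] row_of_cell[OF T y(1)] x y by simp
      have "snd x \<noteq> snd y"
      proof
        assume s: "snd x = snd y"
        obtain j' where xj: "x = (1, j')" and yj: "y = (3, j')"
          using twocol[OF x(1) y(1) rxy s] s by (metis prod.collapse)
        show False
        proof (cases j' j rule: linorder_cases)
          case less
          then have "T (1, j') < T (1, j)" using rows True x(1) xj by blast
          then show ?thesis using x xj i a_def by simp
        next
          case greater
          then have "T (3, j) < T (3, j')" using rows True y(1) yj by blast
          then show ?thesis using y yj i c_def by simp
        next
          case equal
          then show ?thesis using x y xj yj a_def c_def ne by simp
        qed
      qed
      then have "\<not> minimal_SET D T" using not_minimal[OF T x(1) y(1) x(2) y(2) rxy] by blast
      then show False using assms(4) D_def by simp
    qed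
    then have "T ` {c \<in> D. snd c = j} = {a..a+1}"
      unfolding col a_def c_def by auto
    then show ?thesis unfolding D_def by blast
  qed
qed

end
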